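(* Let $n\ge 3$ be an integer, let $d_0,\dots,d_{n-1}>0$ (indices modulo $n$), and let $\lambda\in(\tfrac14,1)$. With $\alpha_j$, $\beta_i$ and the $n\times n$ matrix $Q_n$ defined as in the context, let $S_n$ be the $4n\times 4n$ matrix of the linear map $$(P_j^{0,0},P_j^{1,0},P_j^{0,1},P_j^{1,1})_{j=0}^{n-1}\mapsto(\overline P_j^{0,0},\overline P_j^{1,0},\overline P_j^{0,1},\overline P_j^{1,1})_{j=0}^{n-1}$$ given, for all $j$, by $$\overline P_j^{0,0}=\sum_{i=0}^{n-1}Q_{j,i}P_i^{0,0},$$ $$\overline P_j^{1,0}=\frac{3(2d_{j-1}+d_{j+1})P_j^{0,0}+3d_{j+1}P_{j-1}^{0,0}+(2d_{j-1}+d_{j+1})P_j^{1,0}+d_{j+1}P_{j-1}^{0,1}}{8(d_{j-1}+d_{j+1})},$$ $$\overline P_{j-1}^{0,1}=\frac{3d_{j-1}P_j^{0,0}+3(d_{j-1}+2d_{j+1})P_{j-1}^{0,0}+d_{j-1}P_j^{1,0}+(d_{j-1}+2d_{j+1})P_{j-1}^{0,1}}{8(d_{j-1}+d_{j+1})},$$ $$\overline P_j^{1,1}=\tfrac{9}{16}P_j^{0,0}+\tfrac{3}{16}P_j^{1,0}+\tfrac{3}{16}P_j^{0,1}+\tfrac{1}{16}P_j^{1,1}.$$ Then the eigenvalues of $S_n$ satisfy $\lambda_1=1>\lambda_2=\lambda_3=\lambda>|\lambda_k|$ for $k=4,5,\dots,4n$; that is, $1$ is a simple eigenvalue, $\lambda$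 is an eigenvalue of multiplicity two, and all other $4n-3$ eigenvalues (with multiplicity) have modulus less than $\lambda$.
   Context: Indices are modulo $n$. $\alpha_j=\frac{1}{n}\frac{d_{j-1}d_{j+2}}{(d_{j-1}+d_{j+1})(d_j+d_{j+2})}$, $\beta_i=\frac{d_{i-1}(d_{i-2}+d_{i+2})+d_{i+2}(d_{i-1}+d_{i+3})}{\sum_{k=0}^{n-1}(d_k+d_{k+2})(d_{k-1}+d_{k+3})}$, and $Q_n=(Q_{i,j})$ with $Q_{i,j}=(1-\lambda)\beta_j+2\lambda\alpha_i(1+2\cos\frac{2(j-i)\pi}{n})$ for $j\ne i$ and $Q_{i,i}=\lambda+(1-\lambda)\beta_i-2(n-3)\lambda\alpha_i$. The points $P_j^{a,b}$ are the control points in the two rings around the polygonal face (of valence $n$) in a tuned hybrid non-uniform subdivision mesh, and $S_n$ is the local subdivision matrix (after enough levels that neighboring knot intervals equal $d_j$); in the paper the unknowns are ordered as $P^{0,0}_0,\dots,P^{0,0}_{n-1}$, then the pairs $(P_j^{1,0},P_{j-1}^{0,1})$, then $P^{1,1}_0,\dots,P^{1,1}_{n-1}$, which gives a block lower-triangular matrix. *)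

theory Defs
  imports Complex_Main "Jordan_Normal_Form.Char_Poly"
begin

definition dm :: "(nat \<Rightarrow> real) \<Rightarrow> nat \<Rightarrow> int \<Rightarrow> real" where
  "dm d n j = d (nat (j mod int n))"

definition alpha :: "(nat \<Rightarrow> real) \<Rightarrow> nat \<Rightarrow> int \<Rightarrow> real" where
  "alpha d n j = (1 / real n) * (dm d n (j-1) * dm d n (j+2)) /
     ((dm d n (j-1) + dm d n (j+1)) * (dm d n j + dm d n (j+2)))"

definition beta :: "(nat \<Rightarrow> real) \<Rightarrow> nat \<Rightarrow> int \<Rightarrow> real" where
  "beta d n i = (dm d n (i-1) * (dm d n (i-2) + dm d n (i+2)) + dm d n (i+2) * (dm d n (i-1) + dm d n (i+3))) /
     (\<Sum>k<n. (dm d n (int k) + dm d n (int k + 2)) * (dm d n (int k - 1) + dm d n (int k + 3)))"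

definition Qn :: "(nat \<Rightarrow> real) \<Rightarrow> nat \<Rightarrow> real \<Rightarrow> nat \<Rightarrow> nat \<Rightarrow> real" where
  "Qn d n lam i j = (if i = j
     then lam + (1 - lam) * beta d n (int i) - 2 * (real n - 3) * lam * alpha d n (int i)
     else (1 - lam) * beta d n (int j)
          + 2 * lam * alpha d n (int i) * (1 + 2 * cos (2 * (real_of_int (int j - int i)) * pi / real n)))"

text \<open>Coordinates of a vector v in R^(4n): block t (0: P^{0,0}, 1: P^{1,0}, 2: P^{0,1}, 3: P^{1,1}),
  index j taken modulo n; i.e. P_j^{(t)} = v (t*n + (j mod n)).\<close>
definition comp :: "nat \<Rightarrow> (nat \<Rightarrow> real) \<Rightarrow> nat \<Rightarrow> int \<Rightarrow> real" where
  "comp n v t j = v (t * n + nat (j mod int n))"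

definition subdiv_map :: "(nat \<Rightarrow> real) \<Rightarrow> nat \<Rightarrow> real \<Rightarrow> (nat \<Rightarrow> real) \<Rightarrow> nat \<Rightarrow> real" where
  "subdiv_map d n lam v r =
    (let D = dm d n; P00 = comp n v 0; P10 = comp n v 1; P01 = comp n v 2; P11 = comp n v 3 in
     if r < n then
       (\<Sum>i<n. Qn d n lam r i * P00 (int i))
     else if r < 2*n then
       (let j = int (r - n) in
        (3 * (2 * D (j-1) + D (j+1)) * P00 j + 3 * D (j+1) * P00 (j-1)
         + (2 * D (j-1) + D (j+1)) * P10 j + D (j+1) * P01 (j-1)) / (8 * (D (j-1) + D (j+1))))
     else if r < 3*n then
       (let j = int (r - 2*n) + 1 in   \<comment> \<open>row r is the coordinate P^{0,1}_{j-1}\<close>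
        (3 * D (j-1) * P00 j + 3 * (D (j-1) + 2 * D (j+1)) * P00 (j-1)
         + D (j-1) * P10 j + (D (j-1) + 2 * D (j+1)) * P01 (j-1)) / (8 * (D (j-1) + D (j+1))))
     else
       (let j = int (r - 3*n) in
        9/16 * P00 j + 3/16 * P10 j + 3/16 * P01 j + 1/16 * P11 j))"

definition Sn :: "(nat \<Rightarrow> real) \<Rightarrow> nat \<Rightarrow> real \<Rightarrow> real mat" where
  "Sn d n lam = mat (4*n) (4*n) (\<lambda>(r, c). subdiv_map d n lam (\<lambda>k. if k = c then 1 else 0) r)"

end

theory Submission
  imports Defs
begin



locale L =
  fixes n :: nat and d :: "nat \<Rightarrow> real" and lam :: real
  assumes n3: "n \<ge> 3" and dpos: "\<And>j. j < n \<Longrightarrow> d j > 0"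
    and lam1: "1/4 < lam" and lam2: "lam < 1"
begin

definition w :: complex where "w = cis (2 * pi / real n)"
definition e :: "nat \<Rightarrow> complex" where "e j = w ^ j"

lemma n_pos: "n > 0" using n3 by simp

lemma Im_w: "Im w > 0"
proof -
  have "0 < 2 * pi / real n" using n_pos by simp
  moreover have "2 * pi / real n < pi"
  proof -
    have "real n > 2" using n3 by simp
    hence "2 * pi < pi * real n" using pi_gt_zero by simp
    thus ?thesis using n_pos by (simp add: divide_less_eq)
  qed
  ultimately show ?thesis unfolding w_def by (simp add: sin_gt_zero)
qed

lemma w_ne: "w \<noteq> 1" "cnj w \<noteq> 1" "cnj w \<noteq> w" "w\<^sup>2 \<noteq> 1"
proof -
  show "w \<noteq> 1" using Im_w by auto
  show "cnj w \<noteq> 1"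
  proof
    assume "cnj w = 1" hence "Im (cnj w) = 0" by simp
    thus False using Im_w by simp
  qed
  show "cnj w \<noteq> w"
  proof
    assume "cnj w = w" hence "Im (cnj w) = Im w" by simp
    thus False using Im_w by simp
  qed
  show "w\<^sup>2 \<noteq> 1"
  proof
    assume "w\<^sup>2 = 1"
    hence "(w - 1) * (w + 1) = 0" by (simp add: algebra_simps power2_eq_square)
    hence "w - 1 = 0 \<or> w + 1 = 0" by simp
    moreover have "Im (w - 1) = Im w" "Im (w + 1) = Im w" by simp_all
    ultimately have "Im (w - 1) = 0 \<or> Im (w + 1) = 0" by (metis zero_complex.sel(2))
    thus False using Im_w by simp
  qed
qed

lemma w_n: "w ^ n = 1"
  unfolding w_def DeMoivre using n_pos by simp

lemma w_cnj: "w * cnj w = 1"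
  unfolding w_def by (simp add: cis_cnj cis_mult)

lemma e_cnj: "e j * cnj (e j) = 1"
  unfolding e_def by (simp add: power_mult_distrib[symmetric] w_cnj)

lemma e0: "e 0 = 1" and e1: "e 1 = w" and e2: "e 2 = w\<^sup>2"
  unfolding e_def by simp_all

lemma geo0: fixes z :: complex assumes "z ^ n = 1" "z \<noteq> 1" shows "(\<Sum>j<n. z ^ j) = 0"
  using geometric_sum[OF assms(2), of n] assms(1) by simp

lemma sum_e: "(\<Sum>j<n. e j) = 0"
  unfolding e_def using geo0[OF w_n w_ne(1)] .

lemma sum_ee: "(\<Sum>j<n. e j * e j) = 0"
proof -
  have "(w\<^sup>2) ^ n = (w ^ n)\<^sup>2" by (simp add: power_mult[symmetric] mult.commute)
  hence "(w\<^sup>2) ^ n = 1" using w_n by simp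
  from geo0[OF this w_ne(4)] show ?thesis unfolding e_def
    by (simp add: power_mult[symmetric] power2_eq_square power_mult_distrib[symmetric] mult.commute)
qed

lemma sum_ce: "(\<Sum>j<n. cnj (e j)) = 0"
  proof -
  have "cnj (\<Sum>j<n. e j) = 0" using sum_e by simp
  thus ?thesis by simp
qed

lemma sum_cece: "(\<Sum>j<n. cnj (e j) * cnj (e j)) = 0"
  proof -
  have "cnj (\<Sum>j<n. e j * e j) = 0" using sum_ee by simp
  thus ?thesis by simp
qed

lemma sum_ece: "(\<Sum>j<n. e j * cnj (e j)) = of_nat n"
  by (simp add: e_cnj)

definition c :: "nat \<Rightarrow> nat \<Rightarrow> complex" where
  "c i j = 1 + e j * cnj (e i) + cnj (e j) * e i"

lemma e_cis: "e j = cis (real j * (2 * pi / real n))"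
  unfolding e_def w_def DeMoivre ..

lemma cos_c: "complex_of_real (1 + 2 * cos (2 * real_of_int (int j - int i) * pi / real n)) = c i j"
proof -
  define x where "x = (real j - real i) * (2 * pi / real n)"
  have a: "e j * cnj (e i) = cis x"
    unfolding e_cis x_def by (simp add: cis_cnj cis_mult algebra_simps diff_divide_distrib)
  have b: "cnj (e j) * e i = cis (- x)"
    unfolding e_cis x_def by (simp add: cis_cnj cis_mult algebra_simps diff_divide_distrib)
  have xx: "2 * real_of_int (int j - int i) * pi / real n = x" unfolding x_def by simp
  have "cis x + cis (- x) = complex_of_real (2 * cos x)"
    by (simp add: complex_eq_iff)
  thus ?thesis unfolding c_def a b xx by (simp add: add.assoc)
qed

lemma c_diag: "c i i = 3"
  unfolding c_def using e_cnj[of i] by (simp add: mult.commute)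

end



lemma vander3:
  fixes a b c w :: complex
  assumes "w \<noteq> 1" "cnj w \<noteq> 1" "cnj w \<noteq> w"
    and "a + b + c = 0" "a + b * w + c * cnj w = 0" "a + b * w^2 + c * (cnj w)^2 = 0"
  shows "a = 0 \<and> b = 0 \<and> c = 0"
proof -
  have e1: "b * (w - 1) + c * (cnj w - 1) = 0"
  proof -
    have "b * (w - 1) + c * (cnj w - 1) = (a + b * w + c * cnj w) - (a + b + c)" by (simp add: algebra_simps)
    thus ?thesis using assms(4,5) by simp
  qed
  have e2: "b * w * (w - 1) + c * cnj w * (cnj w - 1) = 0"
  proof -
    have "b * w * (w - 1) + c * cnj w * (cnj w - 1) = (a + b * w^2 + c * (cnj w)^2) - (a + b * w + c * cnj w)" by (simp add: algebra_simps power2_eq_square)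
    thus ?thesis using assms(5,6) by simp
  qed
  have "c * (cnj w - 1) * (cnj w - w) = 0"
  proof -
    have "c * (cnj w - 1) * (cnj w - w) = (b * w * (w - 1) + c * cnj w * (cnj w - 1)) - w * (b * (w - 1) + c * (cnj w - 1))"
      by (simp add: algebra_simps)
    thus ?thesis using e1 e2 by simp
  qed
  hence c: "c = 0" using assms(1-3) by simp
  hence "b = 0" using e1 assms(1) by simp
  with c assms(4) show ?thesis by simp
qed


context L begin

lemma dm_pos: "dm d n j > 0"
proof -
  have "j mod int n < int n" "0 \<le> j mod int n" using n_pos by simp_all
  hence "nat (j mod int n) < n" by linarith
  thus ?thesis unfolding dm_def using dpos by simp
qed

lemma alpha_pos: "alpha d n j > 0"
  unfolding alpha_def using dm_pos n_pos by (simp add: add_pos_pos)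

lemma alpha_lt: "real n * alpha d n j < 1"
proof -
  define A where "A = dm d n (j-1)"
  define B where "B = dm d n (j+2)"
  define C where "C = dm d n (j+1)"
  define D where "D = dm d n j"
  have pos: "A > 0" "B > 0" "C > 0" "D > 0" unfolding A_def B_def C_def D_def using dm_pos by auto
  have "A * B < (A + C) * (D + B)" using pos by (simp add: algebra_simps add_pos_pos)
  moreover have "real n * alpha d n j = A * B / ((A + C) * (D + B))"
    unfolding alpha_def A_def B_def C_def D_def using n_pos by simp
  ultimately show ?thesis using pos by (simp add: divide_less_eq add_pos_pos)
qed

definition a :: "nat \<Rightarrow> complex" where "a i = complex_of_real (alpha d n (int i))"
definition b :: "nat \<Rightarrow> complex" where "b j = complex_of_real (beta d n (int j))"
definition Q :: "nat \<Rightarrow> nat \<Rightarrow> complex" where "Q i j = complex_of_real (Qn d n lam i j)"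

definition S0 :: "(nat \<Rightarrow> complex) \<Rightarrow> complex" where "S0 f = (\<Sum>j<n. f j)"
definition S1 :: "(nat \<Rightarrow> complex) \<Rightarrow> complex" where "S1 f = (\<Sum>j<n. e j * f j)"
definition S2 :: "(nat \<Rightarrow> complex) \<Rightarrow> complex" where "S2 f = (\<Sum>j<n. cnj (e j) * f j)"
definition Cf :: "(nat \<Rightarrow> complex) \<Rightarrow> nat \<Rightarrow> complex" where
  "Cf f i = S0 f + cnj (e i) * S1 f + e i * S2 f"
definition P :: "(nat \<Rightarrow> complex) \<Rightarrow> nat \<Rightarrow> complex" where
  "P f i = of_nat n * f i - Cf f i"

lemma S_add: "S0 (\<lambda>i. f i + g i) = S0 f + S0 g" "S1 (\<lambda>i. f i + g i) = S1 f + S1 g"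
   "S2 (\<lambda>i. f i + g i) = S2 f + S2 g"
  unfolding S0_def S1_def S2_def by (simp_all add: sum.distrib algebra_simps)
lemma S_diff: "S0 (\<lambda>i. f i - g i) = S0 f - S0 g" "S1 (\<lambda>i. f i - g i) = S1 f - S1 g"
   "S2 (\<lambda>i. f i - g i) = S2 f - S2 g"
  unfolding S0_def S1_def S2_def by (simp_all add: sum_subtractf algebra_simps)
lemma S_mult: "S0 (\<lambda>i. p * f i) = p * S0 f" "S1 (\<lambda>i. p * f i) = p * S1 f"
   "S2 (\<lambda>i. p * f i) = p * S2 f"
  unfolding S0_def S1_def S2_def by (simp_all add: sum_distrib_left algebra_simps)
lemma S_const: "S0 (\<lambda>i. p) = of_nat n * p" "S1 (\<lambda>i. p) = 0" "S2 (\<lambda>i. p) = 0"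
proof -
  show "S0 (\<lambda>i. p) = of_nat n * p" unfolding S0_def by simp
  show "S1 (\<lambda>i. p) = 0" unfolding S1_def using sum_e by (simp add: sum_distrib_right[symmetric])
  show "S2 (\<lambda>i. p) = 0" unfolding S2_def using sum_ce by (simp add: sum_distrib_right[symmetric])
qed
lemma S_e: "S0 e = 0" "S1 e = 0" "S2 e = of_nat n"
  unfolding S0_def S1_def S2_def using sum_e sum_ee sum_ece by (simp_all add: mult.commute)
lemma S_ce: "S0 (\<lambda>i. cnj (e i)) = 0" "S1 (\<lambda>i. cnj (e i)) = of_nat n" "S2 (\<lambda>i. cnj (e i)) = 0"
  unfolding S0_def S1_def S2_def using sum_ce sum_cece sum_ece by (simp_all add: mult.commute)

lemma S_cong: assumes "\<And>i. i < n \<Longrightarrow> f i = g i"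
  shows "S0 f = S0 g" "S1 f = S1 g" "S2 f = S2 g"
  unfolding S0_def S1_def S2_def using assms by (auto intro!: sum.cong)

lemma S_C: "S0 (Cf f) = of_nat n * S0 f" "S1 (Cf f) = of_nat n * S1 f" "S2 (Cf f) = of_nat n * S2 f"
proof -
  have eq: "Cf f = (\<lambda>i. S0 f + S1 f * cnj (e i) + S2 f * e i)"
    unfolding Cf_def by (auto simp: algebra_simps)
  show "S0 (Cf f) = of_nat n * S0 f" "S1 (Cf f) = of_nat n * S1 f" "S2 (Cf f) = of_nat n * S2 f"
    unfolding eq S_add S_mult S_const S_e S_ce by (simp_all add: algebra_simps)
qed

lemma S_P: "S0 (P f) = 0" "S1 (P f) = 0" "S2 (P f) = 0"
  unfolding P_def S_diff S_mult S_C by simp_all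

lemma C_sum: "(\<Sum>j<n. c i j * f j) = Cf f i"
proof -
  have "(\<Sum>j<n. c i j * f j) = (\<Sum>j<n. f j + cnj (e i) * (e j * f j) + e i * (cnj (e j) * f j))"
    unfolding c_def by (intro sum.cong) (auto simp: algebra_simps)
  thus ?thesis unfolding Cf_def S0_def S1_def S2_def by (simp add: sum.distrib sum_distrib_left)
qed

lemma Q_eq: "Q i j = (if i = j then lam - 2 * lam * a i * of_nat n else 0) + (1 - lam) * b j + 2 * lam * a i * c i j"
proof (cases "i = j")
  case True
  thus ?thesis unfolding Q_def Qn_def a_def b_def using c_diag[of i] by (simp add: algebra_simps)
next
  case False
  thus ?thesis unfolding Q_def Qn_def a_def b_def using cos_c[of j i, symmetric] by (simp add: algebra_simps)
qed

lemma Qv: fixes v :: "nat \<Rightarrow> complex" assumes "i < n"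
  shows "(\<Sum>j<n. Q i j * v j) = lam * v i - 2 * lam * a i * of_nat n * v i
      + (1 - lam) * (\<Sum>j<n. b j * v j) + 2 * lam * a i * Cf v i"
proof -
  have "(\<Sum>j<n. Q i j * v j) = (\<Sum>j<n. (if i = j then (lam - 2 * lam * a i * of_nat n) * v j else 0)
     + (1 - lam) * (b j * v j) + (2 * lam * a i) * (c i j * v j))"
    unfolding Q_eq by (intro sum.cong) (auto simp: algebra_simps)
  also have "\<dots> = (lam - 2 * lam * a i * of_nat n) * v i + (1 - lam) * (\<Sum>j<n. b j * v j) + (2 * lam * a i) * Cf v i"
    using assms by (simp add: sum.distrib sum_distrib_left[symmetric] C_sum)
  finally show ?thesis by (simp add: algebra_simps)
qed


lemma P_add: "P (\<lambda>i. f i + g i) i = P f i + P g i"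
  unfolding P_def Cf_def S_add by (simp add: algebra_simps)
lemma P_diff: "P (\<lambda>i. f i - g i) i = P f i - P g i"
  unfolding P_def Cf_def S_diff by (simp add: algebra_simps)
lemma P_mult: "P (\<lambda>i. p * f i) i = p * P f i"
  unfolding P_def Cf_def S_mult by (simp add: algebra_simps)
lemma P_cong: assumes "\<And>i. i < n \<Longrightarrow> f i = g i" "i < n" shows "P f i = P g i"
  unfolding P_def Cf_def using S_cong[OF assms(1)] assms by simp

lemma P_span: "P (\<lambda>i. x + y * e i + z * cnj (e i)) i = 0"
proof -
  have "S0 (\<lambda>i. x + y * e i + z * cnj (e i)) = of_nat n * x"
    "S1 (\<lambda>i. x + y * e i + z * cnj (e i)) = of_nat n * z"
    "S2 (\<lambda>i. x + y * e i + z * cnj (e i)) = of_nat n * y"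
    by (simp_all only: S_add S_mult S_const S_e S_ce) (simp_all add: S_mult S_ce)
  thus ?thesis unfolding P_def Cf_def by (simp add: algebra_simps)
qed

lemma P_span': "P (\<lambda>i. f i + (x + y * e i + z * cnj (e i))) i = P f i"
  using P_add[of f "\<lambda>i. x + y * e i + z * cnj (e i)" i] P_span by simp

lemma rayleigh0: assumes "S0 Y = 0" "S1 Y = 0" "S2 Y = 0"
  shows "(\<Sum>i<n. cnj (Y i) * Cf h i) = 0"
proof -
  have "(\<Sum>i<n. cnj (Y i) * Cf h i) = (\<Sum>i<n. S0 h * cnj (Y i) + S1 h * cnj (e i * Y i) + S2 h * cnj (cnj (e i) * Y i))"
    unfolding Cf_def by (intro sum.cong) (auto simp: algebra_simps)
  also have "\<dots> = S0 h * cnj (S0 Y) + S1 h * cnj (S1 Y) + S2 h * cnj (S2 Y)"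
    unfolding S0_def[of Y] S1_def[of Y] S2_def[of Y] cnj_sum
    by (simp add: sum.distrib sum_distrib_left del: complex_cnj_mult)
  finally show ?thesis using assms by simp
qed

lemma core:
  fixes v :: "nat \<Rightarrow> complex" and \<mu> x y z :: complex
  assumes ev: "\<And>i. i < n \<Longrightarrow> (\<Sum>j<n. Q i j * v j) = \<mu> * v i + x + y * e i + z * cnj (e i)"
    and nz: "k < n" "v k \<noteq> 0" and v0: "v 0 = 0" "v 1 = 0" "v 2 = 0"
  shows "cmod \<mu> < lam"
proof -
  define Y where "Y = P v"
  define K where "K = complex_of_real (1 - lam) * (\<Sum>j<n. b j * v j)"
  have SY: "S0 Y = 0" "S1 Y = 0" "S2 Y = 0" unfolding Y_def by (rule S_P)+
  have eq1: "\<mu> * v i = lam * v i - 2 * lam * (a i * Y i) + ((K - x) - y * e i - z * cnj (e i))"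
    if i: "i < n" for i
  proof -
    note h = ev[OF i, unfolded Qv[OF i]]
    have "\<mu> * v i = (lam * v i - 2 * lam * a i * of_nat n * v i
      + (1 - lam) * (\<Sum>j<n. b j * v j) + 2 * lam * a i * Cf v i) - (x + y * e i + z * cnj (e i))"
      unfolding h by simp
    also have "\<dots> = lam * v i - 2 * lam * (a i * Y i) + ((K - x) - y * e i - z * cnj (e i))"
      unfolding Y_def P_def K_def by (simp add: algebra_simps)
    finally show ?thesis .
  qed
  have eq2: "\<mu> * Y i = lam * Y i - 2 * lam * (of_nat n * (a i * Y i) - Cf (\<lambda>j. a j * Y j) i)"
    if i: "i < n" for i
  proof -
    have "\<mu> * Y i = P (\<lambda>j. \<mu> * v j) i" unfolding Y_def P_mult ..
    also have "\<dots> = P (\<lambda>j. lam * v j - 2 * lam * (a j * Y j) + ((K - x) + (- y) * e j + (- z) * cnj (e j))) i"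
      by (rule P_cong[OF _ i]) (simp add: eq1)
    also have "\<dots> = lam * Y i - 2 * lam * P (\<lambda>j. a j * Y j) i"
      unfolding P_span' by (simp only: P_diff P_mult Y_def)
    also have "\<dots> = lam * Y i - 2 * lam * (of_nat n * (a i * Y i) - Cf (\<lambda>j. a j * Y j) i)"
      unfolding P_def by simp
    finally show ?thesis .
  qed
  have Ynz: "\<exists>i<n. Y i \<noteq> 0"
  proof (rule ccontr)
    assume "\<not> ?thesis"
    hence Y0: "\<And>i. i < n \<Longrightarrow> of_nat n * v i = Cf v i" unfolding Y_def P_def by auto
    have "Cf v 0 = 0" "Cf v 1 = 0" "Cf v 2 = 0"
      using Y0[of 0] Y0[of 1] Y0[of 2] n3 v0 by auto
    hence "S0 v + S2 v + S1 v = 0" "S0 v + S2 v * w + S1 v * cnj w = 0"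
      "S0 v + S2 v * w\<^sup>2 + S1 v * (cnj w)\<^sup>2 = 0"
      unfolding Cf_def e0 e1 e2 by (simp_all add: algebra_simps)
    from vander3[OF w_ne(1-3) this] have "Cf v k = 0" unfolding Cf_def by simp
    with Y0[OF nz(1)] nz(2) n_pos show False by simp
  qed
  then obtain i0 where i0: "i0 < n" "Y i0 \<noteq> 0" by auto
  define Nr where "Nr = (\<Sum>i<n. (cmod (Y i))\<^sup>2)"
  define Ar where "Ar = (\<Sum>i<n. alpha d n (int i) * (cmod (Y i))\<^sup>2)"
  have cY: "cnj (Y i) * Y i = complex_of_real ((cmod (Y i))\<^sup>2)" for i
    using complex_norm_square[of "Y i"] by (simp add: mult.commute del: of_real_power)
  have "(\<Sum>i<n. cnj (Y i) * (\<mu> * Y i)) = (\<Sum>i<n. cnj (Y i) * (lam * Y i - 2 * lam * (of_nat n * (a i * Y i) - Cf (\<lambda>j. a j * Y j) i)))"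
    by (intro sum.cong) (simp_all add: eq2)
  also have "\<dots> = (\<Sum>i<n. lam * (cnj (Y i) * Y i) - 2 * lam * of_nat n * (a i * (cnj (Y i) * Y i)) + 2 * lam * (cnj (Y i) * Cf (\<lambda>j. a j * Y j) i))"
    by (intro sum.cong) (simp_all add: algebra_simps)
  also have "\<dots> = lam * (\<Sum>i<n. cnj (Y i) * Y i) - 2 * lam * of_nat n * (\<Sum>i<n. a i * (cnj (Y i) * Y i)) + 2 * lam * (\<Sum>i<n. cnj (Y i) * Cf (\<lambda>j. a j * Y j) i)"
    by (simp add: sum.distrib sum_subtractf sum_distrib_left)
  also have "\<dots> = of_real (lam * Nr - 2 * lam * real n * Ar)"
    unfolding rayleigh0[OF SY] Nr_def Ar_def cY a_def by simp
  finally have LL: "(\<Sum>i<n. cnj (Y i) * (\<mu> * Y i)) = of_real (lam * Nr - 2 * lam * real n * Ar)" .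
  have "(\<Sum>i<n. cnj (Y i) * (\<mu> * Y i)) = \<mu> * (\<Sum>i<n. cnj (Y i) * Y i)"
    by (simp add: sum_distrib_left algebra_simps)
  also have "(\<Sum>i<n. cnj (Y i) * Y i) = of_real Nr" unfolding cY Nr_def of_real_sum ..
  finally have "\<mu> * of_real Nr = of_real (lam * Nr - 2 * lam * real n * Ar)" using LL by simp
  moreover have Npos: "Nr > 0" unfolding Nr_def
    by (rule sum_pos2[of _ i0]) (use i0 in auto)
  ultimately have mu: "\<mu> = of_real ((lam * Nr - 2 * lam * real n * Ar) / Nr)"
    by (simp add: field_simps)
  have A1: "real n * Ar < Nr" unfolding Ar_def Nr_def sum_distrib_left
  proof (rule sum_strict_mono_ex1)
    show "\<forall>i\<in>{..<n}. real n * (alpha d n (int i) * (cmod (Y i))\<^sup>2) \<le> (cmod (Y i))\<^sup>2"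
      using alpha_lt by (auto intro!: mult_left_le_one_le simp: mult.assoc[symmetric] alpha_pos n_pos less_imp_le)
    show "\<exists>i\<in>{..<n}. real n * (alpha d n (int i) * (cmod (Y i))\<^sup>2) < (cmod (Y i))\<^sup>2"
      using i0 alpha_lt[of "int i0"] by (intro bexI[of _ i0]) (auto simp: mult.assoc[symmetric])
  qed simp
  have nn: "0 \<le> alpha d n (int i) * (cmod (Y i))\<^sup>2" for i
    by (rule mult_nonneg_nonneg[OF less_imp_le[OF alpha_pos] zero_le_power2])
  have A0: "0 < real n * Ar" unfolding Ar_def
    using n_pos by (intro mult_pos_pos sum_pos2[of _ i0]) (use i0 alpha_pos nn in auto)
  have "\<bar>lam * Nr - 2 * lam * real n * Ar\<bar> < lam * Nr"
  proof -
    have lp: "lam > 0" using lam1 by simp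
    have "0 < lam * (real n * Ar)" using A0 lp by simp
    moreover have "lam * (real n * Ar) < lam * Nr" using A1 lp by simp
    ultimately show ?thesis by (simp add: abs_less_iff algebra_simps)
  qed
  thus ?thesis unfolding mu norm_of_real using Npos by (simp add: divide_less_eq)
qed

end



context L begin

lemma shift_sum:
  fixes F :: "int \<Rightarrow> real"
  assumes per: "\<And>j. F (j mod int n) = F j"
  shows "(\<Sum>k<n. F (int k + s)) = (\<Sum>k<n. F (int k))"
proof (rule sum.reindex_bij_witness[where i = "\<lambda>m. nat ((int m - s) mod int n)" and j = "\<lambda>k. nat ((int k + s) mod int n)"])
  fix a assume a: "a \<in> {..<n}"
  have "((int a + s) mod int n - s) mod int n = (int a) mod int n" by (simp add: mod_diff_left_eq)
  also have "\<dots> = int a" using a by simp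
  finally show "nat ((int (nat ((int a + s) mod int n)) - s) mod int n) = a" using n_pos by simp
  show "nat ((int a + s) mod int n) \<in> {..<n}" using n_pos by (simp add: nat_less_iff)
  show "F (int (nat ((int a + s) mod int n))) = F (int a + s)" using n_pos per by simp
next
  fix b assume b: "b \<in> {..<n}"
  have "((int b - s) mod int n + s) mod int n = (int b) mod int n" by (simp add: mod_add_left_eq)
  also have "\<dots> = int b" using b by simp
  finally show "nat ((int (nat ((int b - s) mod int n)) + s) mod int n) = b" using n_pos by simp
  show "nat ((int b - s) mod int n) \<in> {..<n}" using n_pos by (simp add: nat_less_iff)
qed

abbreviation D where "D \<equiv> dm d n"

lemma dm_per: "D (j mod int n) = D j"
  unfolding dm_def by simp

lemma shift_prod: "(\<Sum>k<n. D (int k + s + p) * D (int k + s + q)) = (\<Sum>k<n. D (int k + p) * D (int k + q))"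
proof -
  have per: "(\<lambda>j. D (j + p) * D (j + q)) (j mod int n) = (\<lambda>j. D (j + p) * D (j + q)) j" for j
  proof -
    have "D (j mod int n + p) = D (j + p)" by (metis dm_per mod_add_left_eq)
    moreover have "D (j mod int n + q) = D (j + q)" by (metis dm_per mod_add_left_eq)
    ultimately show ?thesis by simp
  qed
  show ?thesis using shift_sum[of "\<lambda>j. D (j + p) * D (j + q)", OF per, of s] by simp
qed

definition Den where "Den = (\<Sum>k<n. (D (int k) + D (int k + 2)) * (D (int k - 1) + D (int k + 3)))"

lemma Den_pos: "Den > 0"
  unfolding Den_def using n_pos dm_pos by (intro sum_pos) (auto intro!: mult_pos_pos add_pos_pos)

lemma beta_sum: "(\<Sum>i<n. beta d n (int i)) = 1"
proof -
  have t1: "(\<Sum>i<n. D (int i - 1) * D (int i - 2)) = (\<Sum>k<n. D (int k) * D (int k - 1))"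
    using shift_prod[of "-1" 0 "-1"] by (simp add: algebra_simps)
  have t2: "(\<Sum>i<n. D (int i - 1) * D (int i + 2)) = (\<Sum>k<n. D (int k) * D (int k + 3))"
    using shift_prod[of "-1" 0 3] by (simp add: algebra_simps)
  have "(\<Sum>i<n. beta d n (int i)) = (\<Sum>i<n. D (int i - 1) * D (int i - 2) + D (int i - 1) * D (int i + 2)
     + D (int i + 2) * D (int i - 1) + D (int i + 2) * D (int i + 3)) / Den"
    unfolding beta_def Den_def sum_divide_distrib[symmetric] by (simp add: algebra_simps)
  also have "(\<Sum>i<n. D (int i - 1) * D (int i - 2) + D (int i - 1) * D (int i + 2)
     + D (int i + 2) * D (int i - 1) + D (int i + 2) * D (int i + 3)) = Den"
    unfolding Den_def sum.distrib t1 t2 by (simp add: algebra_simps sum.distrib)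
  finally show ?thesis using Den_pos by simp
qed

lemma b_sum: "(\<Sum>j<n. b j) = 1"
  unfolding b_def of_real_sum[symmetric] beta_sum by simp

lemma Q_one: "i < n \<Longrightarrow> (\<Sum>j<n. Q i j * 1) = 1"
proof -
  assume i: "i < n"
  have C1: "Cf (\<lambda>j. 1) i = of_nat n" unfolding Cf_def using S_const[of 1] by simp
  show ?thesis unfolding Qv[OF i] C1 using b_sum by (simp add: algebra_simps)
qed

lemma Q_e: "i < n \<Longrightarrow> (\<Sum>j<n. Q i j * e j) = lam * e i + (1 - lam) * (\<Sum>j<n. b j * e j)"
proof -
  assume i: "i < n"
  have C1: "Cf e i = of_nat n * e i" unfolding Cf_def S_e by simp
  show ?thesis unfolding Qv[OF i] C1 by (simp add: algebra_simps)
qed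

lemma Q_ce: "i < n \<Longrightarrow> (\<Sum>j<n. Q i j * cnj (e j)) = lam * cnj (e i) + (1 - lam) * (\<Sum>j<n. b j * cnj (e j))"
proof -
  assume i: "i < n"
  have C1: "Cf (\<lambda>j. cnj (e j)) i = of_nat n * cnj (e i)" unfolding Cf_def S_ce by simp
  show ?thesis unfolding Qv[OF i] C1 by (simp add: algebra_simps)
qed

end



lemma char_poly_4block_ll0:
  fixes A :: "'a :: idom mat"
  assumes A: "A \<in> carrier_mat n n" and B: "B \<in> carrier_mat n m" and D: "D \<in> carrier_mat m m"
  shows "char_poly (four_block_mat A B (0\<^sub>m m n) D) = char_poly A * char_poly D"
proof -
  let ?cm = "\<lambda> A. [:0, 1:] \<cdot>\<^sub>m 1\<^sub>m (dim_row A) + map_mat (\<lambda>a. [:- a:]) A"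
  let ?B2 = "map_mat (\<lambda>a. [:- a:]) B"
  have "char_poly (four_block_mat A B (0\<^sub>m m n) D) = det (?cm (four_block_mat A B (0\<^sub>m m n) D))"
    unfolding char_poly_defs using A D by simp
  also have "?cm (four_block_mat A B (0\<^sub>m m n) D) = four_block_mat (?cm A) ?B2 (0\<^sub>m m n) (?cm D)"
    by (rule eq_matI, insert A B D, auto simp: one_poly_def)
  also have "det \<dots> = det (?cm A) * det (?cm D)"
    by (rule det_four_block_mat_lower_left_zero[of _ n _ m], insert A B D, auto)
  also have "\<dots> = char_poly A * char_poly D" unfolding char_poly_defs ..
  finally show ?thesis .
qed

lemma char_poly_4block_ur0:
  fixes A :: "'a :: idom mat"
  assumes A: "A \<in> carrier_mat n n" and C: "C \<in> carrier_mat m n" and D: "D \<in> carrier_mat m m"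
  shows "char_poly (four_block_mat A (0\<^sub>m n m) C D) = char_poly A * char_poly D"
proof -
  let ?cm = "\<lambda> A. [:0, 1:] \<cdot>\<^sub>m 1\<^sub>m (dim_row A) + map_mat (\<lambda>a. [:- a:]) A"
  let ?C2 = "map_mat (\<lambda>a. [:- a:]) C"
  have "char_poly (four_block_mat A (0\<^sub>m n m) C D) = det (?cm (four_block_mat A (0\<^sub>m n m) C D))"
    unfolding char_poly_defs using A D by simp
  also have "?cm (four_block_mat A (0\<^sub>m n m) C D) = four_block_mat (?cm A) (0\<^sub>m n m) ?C2 (?cm D)"
    by (rule eq_matI, insert A C D, auto simp: one_poly_def)
  also have "det \<dots> = det (?cm A) * det (?cm D)"
    by (rule det_four_block_mat_upper_right_zero[of _ n _ m], insert A C D, auto)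
  also have "\<dots> = char_poly A * char_poly D" unfolding char_poly_defs ..
  finally show ?thesis .
qed

context L begin

definition Qm :: "complex mat" where "Qm = mat n n (\<lambda>(i,j). Q i j)"
definition Tm :: "complex mat" where "Tm = mat n n (\<lambda>(i,j). if j = 0 then 1 else if j = 1 then e i
   else if j = 2 then cnj (e i) else if i = j then 1 else 0)"

lemma Qm_carrier: "Qm \<in> carrier_mat n n" unfolding Qm_def by simp
lemma Tm_carrier: "Tm \<in> carrier_mat n n" unfolding Tm_def by simp

lemma Tv: assumes v: "v \<in> carrier_vec n" and i: "i < n"
  shows "(Tm *\<^sub>v v) $ i = v $ 0 + e i * v $ 1 + cnj (e i) * v $ 2 + (if 3 \<le> i then v $ i else 0)"
proof -
  have "(Tm *\<^sub>v v) $ i = (\<Sum>j<n. Tm $$ (i, j) * v $ j)"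
    using v i Tm_carrier by (simp add: scalar_prod_def lessThan_atLeast0)
  also have "\<dots> = (\<Sum>j<n. (if j = 0 then v $ 0 else 0) + (if j = 1 then e i * v $ 1 else 0)
     + (if j = 2 then cnj (e i) * v $ 2 else 0) + (if 3 \<le> i then (if j = i then v $ i else 0) else 0))"
    using i by (intro sum.cong) (auto simp: Tm_def)
  also have "\<dots> = v $ 0 + e i * v $ 1 + cnj (e i) * v $ 2 + (if 3 \<le> i then v $ i else 0)"
    using n3 i by (simp add: sum.distrib)
  finally show ?thesis .
qed

lemma Tm_inj: assumes v: "v \<in> carrier_vec n" and T0: "Tm *\<^sub>v v = 0\<^sub>v n"
  shows "v = 0\<^sub>v n"
proof -
  have z: "(Tm *\<^sub>v v) $ i = 0" if "i < n" for i using T0 that by simp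
  have "v $ 0 + v $ 1 + v $ 2 = 0" "v $ 0 + v $ 1 * w + v $ 2 * cnj w = 0"
       "v $ 0 + v $ 1 * w\<^sup>2 + v $ 2 * (cnj w)\<^sup>2 = 0"
    using z[of 0] z[of 1] z[of 2] n3 Tv[OF v, of 0] Tv[OF v, of 1] Tv[OF v, of 2]
    by (auto simp: e_def algebra_simps)
  from vander3[OF w_ne(1-3) this] have 012: "v $ 0 = 0" "v $ 1 = 0" "v $ 2 = 0" by auto
  show ?thesis
  proof (rule eq_vecI)
    fix i assume "i < dim_vec (0\<^sub>v n)"
    hence i: "i < n" by simp
    show "v $ i = 0\<^sub>v n $ i"
    proof (cases "3 \<le> i")
      case True
      with z[OF i] 012 show ?thesis unfolding Tv[OF v i] using i by simp
    next
      case False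
      hence "i = 0 \<or> i = 1 \<or> i = 2" by auto
      with 012 i show ?thesis by auto
    qed
  qed (use v in simp)
qed

lemma Tm_det: "det Tm \<noteq> 0"
proof
  assume "det Tm = 0"
  from this[unfolded det_0_iff_vec_prod_zero[OF Tm_carrier]] Tm_inj show False by blast
qed

lemma Tm_inv: obtains Ti where "Ti \<in> carrier_mat n n" "Ti * Tm = 1\<^sub>m n" "Tm * Ti = 1\<^sub>m n"
proof -
  from det_non_zero_imp_unit[OF Tm_carrier Tm_det]
  have "Tm \<in> Units (ring_mat TYPE(complex) n undefined)" .
  thus ?thesis using that unfolding Units_def ring_mat_def by auto
qed

end



context L begin

definition Ti :: "complex mat" where
  "Ti = (SOME Ti. Ti \<in> carrier_mat n n \<and> Ti * Tm = 1\<^sub>m n \<and> Tm * Ti = 1\<^sub>m n)"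

lemma Ti: "Ti \<in> carrier_mat n n" "Ti * Tm = 1\<^sub>m n" "Tm * Ti = 1\<^sub>m n"
proof -
  obtain T' where "T' \<in> carrier_mat n n" "T' * Tm = 1\<^sub>m n" "Tm * T' = 1\<^sub>m n" by (rule Tm_inv)
  hence "\<exists>Ti. Ti \<in> carrier_mat n n \<and> Ti * Tm = 1\<^sub>m n \<and> Tm * Ti = 1\<^sub>m n" by blast
  from someI_ex[OF this] show "Ti \<in> carrier_mat n n" "Ti * Tm = 1\<^sub>m n" "Tm * Ti = 1\<^sub>m n"
    unfolding Ti_def by auto
qed

definition Mm :: "complex mat" where "Mm = Ti * Qm * Tm"

lemma Mm_carrier: "Mm \<in> carrier_mat n n" unfolding Mm_def using Ti Qm_carrier Tm_carrier by auto

definition kap :: "nat \<Rightarrow> complex" where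
  "kap j = (if j = 1 then (1 - lam) * (\<Sum>k<n. b k * e k) else if j = 2 then (1 - lam) * (\<Sum>k<n. b k * cnj (e k)) else 0)"
definition dg :: "nat \<Rightarrow> complex" where "dg j = (if j = 0 then 1 else lam)"
definition cv :: "nat \<Rightarrow> complex vec" where
  "cv j = vec n (\<lambda>i. if i = j then dg j else if i = 0 then kap j else 0)"

lemma QmTm_col: assumes j: "j < 3" shows "Qm *\<^sub>v col Tm j = Tm *\<^sub>v cv j"
proof (rule eq_vecI)
  fix i assume "i < dim_vec (Tm *\<^sub>v cv j)"
  hence i: "i < n" using Tm_carrier by simp
  have cvc: "cv j \<in> carrier_vec n" unfolding cv_def by simp
  have lhs: "(Qm *\<^sub>v col Tm j) $ i = (\<Sum>k<n. Q i k * Tm $$ (k, j))"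
    using i j n3 Qm_carrier Tm_carrier by (simp add: scalar_prod_def lessThan_atLeast0 Qm_def)
  have rhs: "(Tm *\<^sub>v cv j) $ i = cv j $ 0 + e i * cv j $ 1 + cnj (e i) * cv j $ 2 + (if 3 \<le> i then cv j $ i else 0)"
    by (rule Tv[OF cvc i])
  consider "j = 0" | "j = 1" | "j = 2" using j by linarith
  thus "(Qm *\<^sub>v col Tm j) $ i = (Tm *\<^sub>v cv j) $ i"
  proof cases
    case 1
    have "(\<Sum>k<n. Q i k * Tm $$ (k, j)) = (\<Sum>k<n. Q i k * 1)"
      using 1 n3 by (intro sum.cong) (auto simp: Tm_def)
    thus ?thesis unfolding lhs rhs Q_one[OF i] using 1 n3 i by (simp add: cv_def dg_def kap_def)
  next
    case 2
    have "(\<Sum>k<n. Q i k * Tm $$ (k, j)) = (\<Sum>k<n. Q i k * e k)"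
      using 2 n3 by (intro sum.cong) (auto simp: Tm_def)
    thus ?thesis unfolding lhs rhs Q_e[OF i] using 2 n3 i by (simp add: cv_def dg_def kap_def)
  next
    case 3
    have "(\<Sum>k<n. Q i k * Tm $$ (k, j)) = (\<Sum>k<n. Q i k * cnj (e k))"
      using 3 n3 by (intro sum.cong) (auto simp: Tm_def)
    thus ?thesis unfolding lhs rhs Q_ce[OF i] using 3 n3 i by (simp add: cv_def dg_def kap_def)
  qed
qed (use Qm_carrier Tm_carrier in simp)

lemma Mm_col: assumes j: "j < 3" shows "col Mm j = cv j"
proof -
  have jn: "j < n" using j n3 by simp
  have cvc: "cv j \<in> carrier_vec n" unfolding cv_def by simp
  have "col Mm j = col (Ti * (Qm * Tm)) j" unfolding Mm_def
    using Ti Qm_carrier Tm_carrier by (simp add: assoc_mult_mat[of _ n n _ n _ n])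
  also have "\<dots> = Ti *\<^sub>v (Qm *\<^sub>v col Tm j)"
    using col_mult2[OF Ti(1) mult_carrier_mat[OF Qm_carrier Tm_carrier] jn] col_mult2[OF Qm_carrier Tm_carrier jn]
    by simp
  also have "\<dots> = Ti *\<^sub>v (Tm *\<^sub>v cv j)" unfolding QmTm_col[OF j] ..
  also have "\<dots> = (Ti * Tm) *\<^sub>v cv j" by (rule assoc_mult_mat_vec[symmetric, OF Ti(1) Tm_carrier cvc])
  also have "\<dots> = cv j" unfolding Ti using cvc by simp
  finally show ?thesis .
qed

lemma Mm_entry: assumes j: "j < 3" and i: "i < n"
  shows "Mm $$ (i, j) = (if i = j then dg j else if i = 0 then kap j else 0)"
proof -
  have "Mm $$ (i, j) = col Mm j $ i" using Mm_carrier i j n3 by simp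
  thus ?thesis unfolding Mm_col[OF j] cv_def using i by simp
qed

definition Am :: "complex mat" where "Am = mat 3 3 (\<lambda>(i,j). Mm $$ (i,j))"
definition Bm :: "complex mat" where "Bm = mat 3 (n-3) (\<lambda>(i,j). Mm $$ (i,j+3))"
definition Dm :: "complex mat" where "Dm = mat (n-3) (n-3) (\<lambda>(i,j). Mm $$ (i+3,j+3))"

lemma Am_carrier: "Am \<in> carrier_mat 3 3" unfolding Am_def by simp
lemma Bm_carrier: "Bm \<in> carrier_mat 3 (n-3)" unfolding Bm_def by simp
lemma Dm_carrier: "Dm \<in> carrier_mat (n-3) (n-3)" unfolding Dm_def by simp

lemma Mm_block: "Mm = four_block_mat Am Bm (0\<^sub>m (n-3) 3) Dm"
proof (rule eq_matI)
  show "dim_row Mm = dim_row (four_block_mat Am Bm (0\<^sub>m (n-3) 3) Dm)"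
    using Mm_carrier n3 by (simp add: Am_def Dm_def)
  show "dim_col Mm = dim_col (four_block_mat Am Bm (0\<^sub>m (n-3) 3) Dm)"
    using Mm_carrier n3 by (simp add: Am_def Dm_def Bm_def)
  fix i j assume "i < dim_row (four_block_mat Am Bm (0\<^sub>m (n-3) 3) Dm)"
     "j < dim_col (four_block_mat Am Bm (0\<^sub>m (n-3) 3) Dm)"
  hence i: "i < 3 + (n-3)" and j: "j < 3 + (n-3)" by (simp_all add: Am_def Dm_def Bm_def)
  have in': "i < n" "j < n" using i j n3 by auto
  show "Mm $$ (i, j) = four_block_mat Am Bm (0\<^sub>m (n-3) 3) Dm $$ (i, j)"
  proof (cases "i < 3 \<or> 3 \<le> j")
    case True
    thus ?thesis using i j by (auto simp: Am_def Bm_def Dm_def)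
  next
    case False
    hence "i \<ge> 3" "j < 3" by auto
    thus ?thesis using Mm_entry[of j i] in' i j by (simp add: Am_def Bm_def Dm_def)
  qed
qed

lemma Am_ut: "upper_triangular Am"
  unfolding upper_triangular_def Am_def using Mm_entry n3 by auto

lemma char_Am: "char_poly Am = [:-1, 1:] * [:- of_real lam, 1:]^2"
proof -
  have "diag_mat Am = [1, of_real lam, of_real lam]"
    unfolding diag_mat_def Am_def using Mm_entry n3 by (simp add: upt_rec dg_def)
  thus ?thesis unfolding char_poly_upper_triangular[OF Am_carrier Am_ut]
    by (simp add: power2_eq_square)
qed

lemma char_Qm: "char_poly Qm = [:-1, 1:] * [:- of_real lam, 1:]^2 * char_poly Dm"
proof -
  have "similar_mat Qm Mm"
  proof (rule similar_matI[of Qm Mm Tm Ti n])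
    show "{Qm, Mm, Tm, Ti} \<subseteq> carrier_mat n n" using Qm_carrier Mm_carrier Tm_carrier Ti by auto
    show "Tm * Ti = 1\<^sub>m n" "Ti * Tm = 1\<^sub>m n" using Ti by auto
    have r1: "Tm * (Ti * X) = X" if X: "X \<in> carrier_mat n n" for X
    proof -
      have "Tm * (Ti * X) = (Tm * Ti) * X" by (rule assoc_mult_mat[symmetric, OF Tm_carrier Ti(1) X])
      thus ?thesis unfolding Ti using X by simp
    qed
    have "Tm * Mm * Ti = Qm" unfolding Mm_def
      using Ti Qm_carrier Tm_carrier r1[OF Qm_carrier] by (simp add: assoc_mult_mat[of _ n n _ n _ n])
    thus "Qm = Tm * Mm * Ti" by simp
  qed
  hence "char_poly Qm = char_poly Mm" by (rule char_poly_similar)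
  also have "\<dots> = char_poly Am * char_poly Dm"
    unfolding Mm_block by (rule char_poly_4block_ll0[OF Am_carrier Bm_carrier Dm_carrier])
  finally show ?thesis unfolding char_Am .
qed


lemma QmTm: "Qm * Tm = Tm * Mm"
proof -
  have r1: "Tm * (Ti * X) = X" if X: "X \<in> carrier_mat n n" for X
  proof -
    have "Tm * (Ti * X) = (Tm * Ti) * X" by (rule assoc_mult_mat[symmetric, OF Tm_carrier Ti(1) X])
    thus ?thesis unfolding Ti using X by simp
  qed
  show ?thesis unfolding Mm_def
    using Ti Qm_carrier Tm_carrier r1[OF mult_carrier_mat[OF Qm_carrier Tm_carrier]]
    by (simp add: assoc_mult_mat[of _ n n _ n _ n])
qed

lemma Dm_root: assumes "poly (char_poly Dm) \<mu> = 0" shows "cmod \<mu> < lam"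
proof -
  have "eigenvalue Dm \<mu>" using eigenvalue_root_char_poly[OF Dm_carrier] assms by simp
  then obtain wv where wv: "wv \<in> carrier_vec (n-3)" "wv \<noteq> 0\<^sub>v (n-3)" "Dm *\<^sub>v wv = \<mu> \<cdot>\<^sub>v wv"
    unfolding eigenvalue_def eigenvector_def using Dm_carrier by auto
  define v where "v = 0\<^sub>v 3 @\<^sub>v wv"
  have nn: "3 + (n-3) = n" using n3 by simp
  have dv: "dim_vec v = n" unfolding v_def using wv(1) nn by simp
  hence vc: "v \<in> carrier_vec n" by (rule carrier_vecI)
  have vi: "v $ i = (if i < 3 then 0 else wv $ (i - 3))" if "i < n" for i
  proof -
    have dw: "dim_vec wv = n - 3" using wv(1) by simp
    have "i < dim_vec (0\<^sub>v 3 :: complex vec) + dim_vec wv" using that dw n3 by simp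
    hence "v $ i = (if i < 3 then (0\<^sub>v 3 :: complex vec) $ i else wv $ (i - 3))"
      unfolding v_def by (subst index_append_vec(1)) simp_all
    thus ?thesis by (cases "i < 3") simp_all
  qed
  have Mv: "Mm *\<^sub>v v = (Am *\<^sub>v 0\<^sub>v 3 + Bm *\<^sub>v wv) @\<^sub>v (0\<^sub>m (n-3) 3 *\<^sub>v 0\<^sub>v 3 + Dm *\<^sub>v wv)"
    unfolding Mm_block v_def
    by (rule four_block_mat_mult_vec[OF Am_carrier Bm_carrier zero_carrier_mat Dm_carrier zero_carrier_vec wv(1)])
  define u where "u = Mm *\<^sub>v v"
  have ui: "u $ i = \<mu> * v $ i" if i: "3 \<le> i" "i < n" for i
  proof -
    have "u $ i = (0\<^sub>m (n-3) 3 *\<^sub>v 0\<^sub>v 3 + Dm *\<^sub>v wv) $ (i - 3)"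
      unfolding u_def Mv using i Am_carrier Bm_carrier Dm_carrier nn by simp
    also have "\<dots> = \<mu> * wv $ (i - 3)" using i wv Dm_carrier by simp
    finally show ?thesis using vi[OF i(2)] i by simp
  qed
  have Tvv: "Tm *\<^sub>v v = v"
  proof (rule eq_vecI)
    fix i assume "i < dim_vec v" hence i: "i < n" using dv by simp
    show "(Tm *\<^sub>v v) $ i = v $ i" unfolding Tv[OF vc i] using vi n3 i by auto
  qed (use Tm_carrier dv in simp)
  have Qv: "Qm *\<^sub>v v = Tm *\<^sub>v u"
  proof -
    have "Qm *\<^sub>v v = Qm *\<^sub>v (Tm *\<^sub>v v)" unfolding Tvv ..
    also have "\<dots> = (Qm * Tm) *\<^sub>v v" by (rule assoc_mult_mat_vec[symmetric, OF Qm_carrier Tm_carrier vc])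
    also have "\<dots> = Tm *\<^sub>v u" unfolding QmTm u_def by (rule assoc_mult_mat_vec[OF Tm_carrier Mm_carrier vc])
    finally show ?thesis .
  qed
  have uc: "u \<in> carrier_vec n" unfolding u_def using Mm_carrier vc by simp
  have ev: "(\<Sum>j<n. Q i j * v $ j) = \<mu> * v $ i + u $ 0 + u $ 1 * e i + u $ 2 * cnj (e i)" if i: "i < n" for i
  proof -
    have "(\<Sum>j<n. Q i j * v $ j) = (Qm *\<^sub>v v) $ i"
      using i vc Qm_carrier by (simp add: scalar_prod_def lessThan_atLeast0 Qm_def)
    also have "\<dots> = u $ 0 + e i * u $ 1 + cnj (e i) * u $ 2 + (if 3 \<le> i then u $ i else 0)"
      unfolding Qv by (rule Tv[OF uc i])
    also have "\<dots> = \<mu> * v $ i + u $ 0 + u $ 1 * e i + u $ 2 * cnj (e i)"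
      using ui[of i] vi[OF i] i by (auto simp: algebra_simps)
    finally show ?thesis .
  qed
  obtain k where k: "k < n - 3" "wv $ k \<noteq> 0"
  proof -
    have "\<exists>k < n - 3. wv $ k \<noteq> 0"
    proof (rule ccontr)
      assume "\<not> (\<exists>k < n - 3. wv $ k \<noteq> 0)"
      hence "wv = 0\<^sub>v (n-3)" using wv(1) by (intro eq_vecI) auto
      with wv(2) show False by simp
    qed
    thus ?thesis using that by blast
  qed
  have "v $ (k + 3) \<noteq> 0" using vi[of "k+3"] k by simp
  moreover have "k + 3 < n" using k by simp
  moreover have "v $ 0 = 0" "v $ 1 = 0" "v $ 2 = 0" using vi n3 by auto
  ultimately show ?thesis
    by (intro core[of "\<lambda>j. v $ j" \<mu> "u $ 0" "u $ 1" "u $ 2" "k+3"]) (simp_all add: ev)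
qed

end



context L begin

abbreviation dl :: "nat \<Rightarrow> nat \<Rightarrow> real" where "dl cl \<equiv> (\<lambda>k. if k = cl then 1 else 0)"

lemma nat_mod_id: "i < n \<Longrightarrow> nat (int i mod int n) = i" by simp

lemma sm_row0: assumes r: "r < n"
  shows "subdiv_map d n lam (dl cl) r = (if cl < n then Qn d n lam r cl else 0)"
proof -
  have "subdiv_map d n lam (dl cl) r = (\<Sum>i<n. Qn d n lam r i * (if nat (int i mod int n) = cl then 1 else 0))"
    unfolding subdiv_map_def Let_def comp_def using r by simp
  also have "\<dots> = (\<Sum>i<n. if i = cl then Qn d n lam r cl else 0)"
    by (intro sum.cong) auto
  also have "\<dots> = (if cl < n then Qn d n lam r cl else 0)" by simp
  finally show ?thesis .
qed

lemma sm_row1: assumes i: "i < n"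
  shows "subdiv_map d n lam (dl cl) (n + i) =
    (3 * (2 * D (int i - 1) + D (int i + 1)) * dl cl i + 3 * D (int i + 1) * dl cl (nat ((int i - 1) mod int n))
     + (2 * D (int i - 1) + D (int i + 1)) * dl cl (n + i) + D (int i + 1) * dl cl (2 * n + nat ((int i - 1) mod int n)))
    / (8 * (D (int i - 1) + D (int i + 1)))"
  unfolding subdiv_map_def Let_def comp_def using i by simp

lemma sm_row2: assumes i: "i < n"
  shows "subdiv_map d n lam (dl cl) (2 * n + i) =
    (3 * D (int i) * dl cl (nat ((int i + 1) mod int n)) + 3 * (D (int i) + 2 * D (int i + 2)) * dl cl i
     + D (int i) * dl cl (n + nat ((int i + 1) mod int n)) + (D (int i) + 2 * D (int i + 2)) * dl cl (2 * n + i))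
    / (8 * (D (int i) + D (int i + 2)))"
proof -
  have e1: "int i + 1 + 1 = int i + 2" by simp
  show ?thesis unfolding subdiv_map_def Let_def comp_def using i by (simp add: e1)
qed

lemma sm_row3: assumes i: "i < n"
  shows "subdiv_map d n lam (dl cl) (3 * n + i) =
    9/16 * dl cl i + 3/16 * dl cl (n + i) + 3/16 * dl cl (2 * n + i) + 1/16 * dl cl (3 * n + i)"
  unfolding subdiv_map_def Let_def comp_def using i by simp


lemma pair2:
  fixes p q \<mu> :: complex and A B :: real
  assumes A: "A > 0" and B: "B > 0"
    and e1: "\<mu> * p * (8 * (A + B)) = (2 * A + B) * p + B * q"
    and e2: "\<mu> * q * (8 * (A + B)) = A * p + (A + 2 * B) * q"
    and m1: "\<mu> \<noteq> 1/4" and m2: "\<mu> \<noteq> 1/8"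
  shows "p = 0 \<and> q = 0"
proof -
  define t where "t = \<mu> * (8 * (A + B))"
  have f1: "(t - (2 * A + B)) * p = B * q" using e1 unfolding t_def by (simp add: algebra_simps)
  have f2: "(t - (A + 2 * B)) * q = A * p" using e2 unfolding t_def by (simp add: algebra_simps)
  have "(t - (2 * A + B)) * (t - (A + 2 * B)) * p = B * ((t - (A + 2 * B)) * q)"
    using f1 by (metis mult.commute mult.left_commute)
  also have "\<dots> = (A * B) * p" unfolding f2 by (simp add: algebra_simps)
  finally have X: "((t - (2 * A + B)) * (t - (A + 2 * B)) - A * B) * p = 0" by (simp add: algebra_simps)
  have E: "(t - (2 * A + B)) * (t - (A + 2 * B)) - A * B = 2 * (complex_of_real A + complex_of_real B)^2 * ((8 * \<mu> - 1) * (4 * \<mu> - 1))"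
    unfolding t_def by (simp add: algebra_simps power2_eq_square)
  have n1: "(8 * \<mu> - 1) \<noteq> 0" "(4 * \<mu> - 1) \<noteq> 0" using m1 m2 by (auto simp: field_simps)
  have n2: "complex_of_real A + complex_of_real B \<noteq> 0"
  proof
    assume "complex_of_real A + complex_of_real B = 0"
    hence "Re (complex_of_real A + complex_of_real B) = 0" by simp
    thus False using A B by simp
  qed
  have W: "2 * (complex_of_real A + complex_of_real B)^2 * ((8 * \<mu> - 1) * (4 * \<mu> - 1)) \<noteq> 0"
    using n1 n2 by simp
  from X have "(2 * (complex_of_real A + complex_of_real B)^2 * ((8 * \<mu> - 1) * (4 * \<mu> - 1))) * p = 0"
    unfolding E .
  with W have p: "p = 0" by simp
  hence "B * q = 0" using f1 by simp
  with B p show ?thesis by simp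
qed

definition Sm :: "complex mat" where "Sm = map_mat complex_of_real (Sn d n lam)"
lemma Sm_carrier: "Sm \<in> carrier_mat (4*n) (4*n)" unfolding Sm_def Sn_def by simp
lemma Sm_entry: "r < 4*n \<Longrightarrow> c' < 4*n \<Longrightarrow> Sm $$ (r, c') = complex_of_real (subdiv_map d n lam (dl c') r)"
  unfolding Sm_def Sn_def by simp

definition Cm :: "complex mat" where "Cm = mat (3*n) n (\<lambda>(i,j). Sm $$ (i + n, j))"
definition Rm :: "complex mat" where "Rm = mat (3*n) (3*n) (\<lambda>(i,j). Sm $$ (i + n, j + n))"
lemma Cm_carrier: "Cm \<in> carrier_mat (3*n) n" unfolding Cm_def by simp
lemma Rm_carrier: "Rm \<in> carrier_mat (3*n) (3*n)" unfolding Rm_def by simp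
lemma dims[simp]: "dim_row Rm = 3*n" "dim_col Rm = 3*n" "dim_row Cm = 3*n" "dim_col Cm = n"
  "dim_row Qm = n" "dim_col Qm = n"
  unfolding Rm_def Cm_def Qm_def by simp_all

lemma Sm_block: "Sm = four_block_mat Qm (0\<^sub>m n (3*n)) Cm Rm"
proof (rule eq_matI)
  show "dim_row Sm = dim_row (four_block_mat Qm (0\<^sub>m n (3*n)) Cm Rm)"
    using Sm_carrier Qm_carrier Rm_carrier by simp
  show "dim_col Sm = dim_col (four_block_mat Qm (0\<^sub>m n (3*n)) Cm Rm)"
    using Sm_carrier Qm_carrier Rm_carrier by simp
  fix i j assume "i < dim_row (four_block_mat Qm (0\<^sub>m n (3*n)) Cm Rm)"
    "j < dim_col (four_block_mat Qm (0\<^sub>m n (3*n)) Cm Rm)"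
  hence i: "i < n + 3*n" and j: "j < n + 3*n" using Qm_carrier Rm_carrier by auto
  show "Sm $$ (i, j) = four_block_mat Qm (0\<^sub>m n (3*n)) Cm Rm $$ (i, j)"
  proof (cases "i < n")
    case True
    have "Sm $$ (i, j) = complex_of_real (if j < n then Qn d n lam i j else 0)"
      using i j True by (simp add: Sm_entry sm_row0)
    thus ?thesis using True i j Qm_carrier by (auto simp: Qm_def Q_def)
  next
    case False
    thus ?thesis using i j Qm_carrier by (auto simp: Cm_def Rm_def)
  qed
qed

lemma char_Sm: "char_poly Sm = char_poly Qm * char_poly Rm"
  unfolding Sm_block by (rule char_poly_4block_ur0[OF Qm_carrier Cm_carrier Rm_carrier])

end



context L begin

lemma Rm_entry: "i < 3*n \<Longrightarrow> j < 3*n \<Longrightarrow> Rm $$ (i, j) = complex_of_real (subdiv_map d n lam (dl (j + n)) (i + n))"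
  unfolding Rm_def by (simp add: Sm_entry)

lemma Rv: assumes wv: "wv \<in> carrier_vec (3*n)" and i: "i < 3*n"
  shows "(Rm *\<^sub>v wv) $ i = (\<Sum>j<3*n. complex_of_real (subdiv_map d n lam (dl (j + n)) (i + n)) * wv $ j)"
  using wv i Rm_carrier by (simp add: scalar_prod_def lessThan_atLeast0 Rm_entry)

lemma RvA: assumes wv: "wv \<in> carrier_vec (3*n)" and i: "i < n"
  shows "(Rm *\<^sub>v wv) $ i = complex_of_real ((2 * D (int i - 1) + D (int i + 1)) / (8 * (D (int i - 1) + D (int i + 1)))) * wv $ i
     + complex_of_real (D (int i + 1) / (8 * (D (int i - 1) + D (int i + 1)))) * wv $ (n + nat ((int i - 1) mod int n))"
proof -
  define jm where "jm = nat ((int i - 1) mod int n)"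
  have jm: "jm < n" unfolding jm_def using n_pos by (simp add: nat_less_iff)
  define a where "a = D (int i - 1)"
  define b where "b = D (int i + 1)"
  have i3: "i < 3 * n" using i by simp
  have "(Rm *\<^sub>v wv) $ i = (\<Sum>j<3*n. (if j = i then complex_of_real ((2 * a + b) / (8 * (a + b))) * wv $ i else 0)
      + (if j = n + jm then complex_of_real (b / (8 * (a + b))) * wv $ (n + jm) else 0))"
    unfolding Rv[OF wv i3]
  proof (intro sum.cong refl)
    fix j assume j: "j \<in> {..<3*n}"
    have sm: "subdiv_map d n lam (dl (j + n)) (i + n) =
      (3 * (2 * a + b) * dl (j + n) i + 3 * b * dl (j + n) jm
       + (2 * a + b) * dl (j + n) (n + i) + b * dl (j + n) (2 * n + jm)) / (8 * (a + b))"
      using sm_row1[OF i, of "j + n"] unfolding a_def b_def jm_def by (simp add: add.commute)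
    show "complex_of_real (subdiv_map d n lam (dl (j + n)) (i + n)) * wv $ j =
      (if j = i then complex_of_real ((2 * a + b) / (8 * (a + b))) * wv $ i else 0)
      + (if j = n + jm then complex_of_real (b / (8 * (a + b))) * wv $ (n + jm) else 0)"
      unfolding sm using i jm by auto
  qed
  also have "\<dots> = complex_of_real ((2 * a + b) / (8 * (a + b))) * wv $ i + complex_of_real (b / (8 * (a + b))) * wv $ (n + jm)"
    using i jm by (simp add: sum.distrib)
  finally show ?thesis unfolding a_def b_def jm_def .
qed

lemma RvB: assumes wv: "wv \<in> carrier_vec (3*n)" and i: "i < n"
  shows "(Rm *\<^sub>v wv) $ (n + i) = complex_of_real (D (int i) / (8 * (D (int i) + D (int i + 2)))) * wv $ (nat ((int i + 1) mod int n))
     + complex_of_real ((D (int i) + 2 * D (int i + 2)) / (8 * (D (int i) + D (int i + 2)))) * wv $ (n + i)"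
proof -
  define jp where "jp = nat ((int i + 1) mod int n)"
  have jp: "jp < n" unfolding jp_def using n_pos by (simp add: nat_less_iff)
  define a where "a = D (int i)"
  define b where "b = D (int i + 2)"
  have i3: "n + i < 3 * n" using i by simp
  have "(Rm *\<^sub>v wv) $ (n + i) = (\<Sum>j<3*n. (if j = jp then complex_of_real (a / (8 * (a + b))) * wv $ jp else 0)
      + (if j = n + i then complex_of_real ((a + 2 * b) / (8 * (a + b))) * wv $ (n + i) else 0))"
    unfolding Rv[OF wv i3]
  proof (intro sum.cong refl)
    fix j assume j: "j \<in> {..<3*n}"
    have sm: "subdiv_map d n lam (dl (j + n)) (n + i + n) =
      (3 * a * dl (j + n) jp + 3 * (a + 2 * b) * dl (j + n) i
       + a * dl (j + n) (n + jp) + (a + 2 * b) * dl (j + n) (2 * n + i)) / (8 * (a + b))"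
    proof -
      have eq: "n + i + n = 2 * n + i" by simp
      show ?thesis unfolding eq a_def b_def jp_def by (rule sm_row2[OF i])
    qed
    show "complex_of_real (subdiv_map d n lam (dl (j + n)) (n + i + n)) * wv $ j =
      (if j = jp then complex_of_real (a / (8 * (a + b))) * wv $ jp else 0)
      + (if j = n + i then complex_of_real ((a + 2 * b) / (8 * (a + b))) * wv $ (n + i) else 0)"
      unfolding sm using i jp by auto
  qed
  also have "\<dots> = complex_of_real (a / (8 * (a + b))) * wv $ jp + complex_of_real ((a + 2 * b) / (8 * (a + b))) * wv $ (n + i)"
    using i jp by (simp add: sum.distrib)
  finally show ?thesis unfolding a_def b_def jp_def .
qed

lemma RvC: assumes wv: "wv \<in> carrier_vec (3*n)" and i: "i < n"
  shows "(Rm *\<^sub>v wv) $ (2 * n + i) = 3/16 * wv $ i + 3/16 * wv $ (n + i) + 1/16 * wv $ (2 * n + i)"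
proof -
  have i3: "2 * n + i < 3 * n" using i by simp
  have "(Rm *\<^sub>v wv) $ (2 * n + i) = (\<Sum>j<3*n. (if j = i then 3/16 * wv $ i else 0)
      + (if j = n + i then 3/16 * wv $ (n + i) else 0) + (if j = 2 * n + i then 1/16 * wv $ (2 * n + i) else 0))"
    unfolding Rv[OF wv i3]
  proof (intro sum.cong refl)
    fix j assume j: "j \<in> {..<3*n}"
    have sm: "subdiv_map d n lam (dl (j + n)) (2 * n + i + n) =
      9/16 * dl (j + n) i + 3/16 * dl (j + n) (n + i) + 3/16 * dl (j + n) (2 * n + i) + 1/16 * dl (j + n) (3 * n + i)"
    proof -
      have "2 * n + i + n = 3 * n + i" by simp
      thus ?thesis using sm_row3[OF i, of "j + n"] by simp
    qed
    show "complex_of_real (subdiv_map d n lam (dl (j + n)) (2 * n + i + n)) * wv $ j =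
      (if j = i then 3/16 * wv $ i else 0)
      + (if j = n + i then 3/16 * wv $ (n + i) else 0) + (if j = 2 * n + i then 1/16 * wv $ (2 * n + i) else 0)"
      unfolding sm using i by auto
  qed
  also have "\<dots> = 3/16 * wv $ i + 3/16 * wv $ (n + i) + 1/16 * wv $ (2 * n + i)"
    using i by (simp add: sum.distrib)
  finally show ?thesis .
qed


lemma of_real_div_mult: assumes y: "y \<noteq> 0" shows "complex_of_real (x / y) * complex_of_real y = complex_of_real x"
proof -
  have "x / y * y = x" using y by simp
  hence "complex_of_real (x / y * y) = complex_of_real x" by simp
  thus ?thesis by (simp only: of_real_mult)
qed

lemma pair2':
  fixes p q \<mu> :: complex and A B :: real
  assumes A: "A > 0" and B: "B > 0"
    and h1: "\<mu> * p = complex_of_real ((2 * A + B) / (8 * (A + B))) * p + complex_of_real (B / (8 * (A + B))) * q"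
    and h2: "\<mu> * q = complex_of_real (A / (8 * (A + B))) * p + complex_of_real ((A + 2 * B) / (8 * (A + B))) * q"
    and m1: "\<mu> \<noteq> 1/4" and m2: "\<mu> \<noteq> 1/8"
  shows "p = 0 \<and> q = 0"
proof (rule pair2[OF A B _ _ m1 m2])
  have K: "8 * (A + B) \<noteq> 0" using A B by simp
  have "\<mu> * p * complex_of_real (8 * (A + B)) = (complex_of_real ((2 * A + B) / (8 * (A + B))) * complex_of_real (8 * (A + B))) * p
     + (complex_of_real (B / (8 * (A + B))) * complex_of_real (8 * (A + B))) * q"
    unfolding h1 by (simp add: algebra_simps del: of_real_mult of_real_add)
  thus "\<mu> * p * complex_of_real (8 * (A + B)) = complex_of_real (2 * A + B) * p + complex_of_real B * q"
    unfolding of_real_div_mult[OF K] .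
  have "\<mu> * q * complex_of_real (8 * (A + B)) = (complex_of_real (A / (8 * (A + B))) * complex_of_real (8 * (A + B))) * p
     + (complex_of_real ((A + 2 * B) / (8 * (A + B))) * complex_of_real (8 * (A + B))) * q"
    unfolding h2 by (simp add: algebra_simps del: of_real_mult of_real_add)
  thus "\<mu> * q * complex_of_real (8 * (A + B)) = complex_of_real A * p + complex_of_real (A + 2 * B) * q"
    unfolding of_real_div_mult[OF K] .
qed

lemma Rm_root: assumes root: "poly (char_poly Rm) \<mu> = 0"
  shows "\<mu> = 1/4 \<or> \<mu> = 1/8 \<or> \<mu> = 1/16"
proof (rule ccontr)
  assume nm: "\<not> ?thesis"
  have "eigenvalue Rm \<mu>" using eigenvalue_root_char_poly[OF Rm_carrier] root by simp
  then obtain wv where wv: "wv \<in> carrier_vec (3*n)" "wv \<noteq> 0\<^sub>v (3*n)" "Rm *\<^sub>v wv = \<mu> \<cdot>\<^sub>v wv"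
    unfolding eigenvalue_def eigenvector_def using Rm_carrier by auto
  have ev: "(Rm *\<^sub>v wv) $ i = \<mu> * wv $ i" if "i < 3*n" for i
    using wv(1,3) that by simp
  have pq: "wv $ (nat ((int i + 1) mod int n)) = 0 \<and> wv $ (n + i) = 0" if i: "i < n" for i
  proof -
    define jp where "jp = nat ((int i + 1) mod int n)"
    have jp: "jp < n" unfolding jp_def using n_pos by (simp add: nat_less_iff)
    have ijp: "int jp = (int i + 1) mod int n" unfolding jp_def using n_pos by simp
    have a: "D (int jp - 1) = D (int i)"
      unfolding ijp by (metis dm_per mod_diff_left_eq add_diff_cancel_right')
    have b: "D (int jp + 1) = D (int i + 2)"
    proof -
      have "D (int jp + 1) = D ((int i + 1) mod int n + 1)" unfolding ijp ..
      also have "\<dots> = D (int i + 1 + 1)" by (metis dm_per mod_add_left_eq)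
      finally show ?thesis by (simp add: add.assoc)
    qed
    have c: "nat ((int jp - 1) mod int n) = i"
    proof -
      have "(int jp - 1) mod int n = (int i + 1 - 1) mod int n" unfolding ijp by (simp add: mod_diff_left_eq)
      thus ?thesis using i by simp
    qed
    have h1: "\<mu> * wv $ jp = complex_of_real ((2 * D (int i) + D (int i + 2)) / (8 * (D (int i) + D (int i + 2)))) * wv $ jp
       + complex_of_real (D (int i + 2) / (8 * (D (int i) + D (int i + 2)))) * wv $ (n + i)"
      using ev[of jp] RvA[OF wv(1) jp] jp unfolding a b c by simp
    have h2: "\<mu> * wv $ (n + i) = complex_of_real (D (int i) / (8 * (D (int i) + D (int i + 2)))) * wv $ jp
       + complex_of_real ((D (int i) + 2 * D (int i + 2)) / (8 * (D (int i) + D (int i + 2)))) * wv $ (n + i)"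
      using ev[of "n + i"] RvB[OF wv(1) i] i unfolding jp_def by simp
    have "wv $ jp = 0 \<and> wv $ (n + i) = 0"
      by (rule pair2'[OF dm_pos dm_pos h1 h2]) (use nm in auto)
    thus ?thesis unfolding jp_def .
  qed
  have p0: "wv $ j = 0" if j: "j < n" for j
  proof -
    define i where "i = nat ((int j - 1) mod int n)"
    have i: "i < n" unfolding i_def using n_pos by (simp add: nat_less_iff)
    have "int i = (int j - 1) mod int n" unfolding i_def using n_pos by simp
    hence "(int i + 1) mod int n = (int j - 1 + 1) mod int n" by (simp add: mod_add_left_eq)
    hence "nat ((int i + 1) mod int n) = j" using j by simp
    thus ?thesis using pq[OF i] by simp
  qed
  have s0: "wv $ (2 * n + i) = 0" if i: "i < n" for i
  proof -
    have "\<mu> * wv $ (2 * n + i) = 3/16 * wv $ i + 3/16 * wv $ (n + i) + 1/16 * wv $ (2 * n + i)"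
      using ev[of "2 * n + i"] RvC[OF wv(1) i] i by simp
    hence "(\<mu> - 1/16) * wv $ (2 * n + i) = 0" using p0[OF i] pq[OF i] by (simp add: algebra_simps)
    thus ?thesis using nm by simp
  qed
  have "wv = 0\<^sub>v (3*n)"
  proof (rule eq_vecI)
    fix k assume "k < dim_vec (0\<^sub>v (3*n) :: complex vec)"
    hence k: "k < 3 * n" by simp
    show "wv $ k = 0\<^sub>v (3*n) $ k"
    proof -
      consider "k < n" | "n \<le> k \<and> k < 2 * n" | "2 * n \<le> k" by linarith
      hence "wv $ k = 0"
      proof cases
        case 1 thus ?thesis by (rule p0)
      next
        case 2
        hence "k = n + (k - n)" "k - n < n" by auto
        thus ?thesis using pq[of "k - n"] by metis
      next
        case 3
        hence "k = 2 * n + (k - 2 * n)" "k - 2 * n < n" using k by auto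
        thus ?thesis using s0[of "k - 2 * n"] by metis
      qed
      thus ?thesis using k by simp
    qed
  qed (use wv(1) in simp)
  with wv(2) show False by simp
qed

end



lemma char_poly_nz: assumes "A \<in> carrier_mat m m" shows "char_poly A \<noteq> 0"
proof
  assume "char_poly A = 0"
  with degree_monic_char_poly[OF assms] show False by simp
qed

context L begin

lemma final:
  "order 1 (char_poly Sm) = 1 \<and> order (complex_of_real lam) (char_poly Sm) = 2
   \<and> (\<forall>\<mu>. poly (char_poly Sm) \<mu> = 0 \<longrightarrow> \<mu> \<noteq> 1 \<longrightarrow> \<mu> \<noteq> complex_of_real lam \<longrightarrow> cmod \<mu> < lam)"
proof -
  define p1 :: "complex poly" where "p1 = [:-1, 1:]"
  define p2 where "p2 = [:- complex_of_real lam, 1:] ^ 2"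
  define cD where "cD = char_poly Dm"
  define cR where "cR = char_poly Rm"
  have cS: "char_poly Sm = p1 * p2 * cD * cR"
    unfolding char_Sm char_Qm p1_def p2_def cD_def cR_def by simp
  have nz: "p1 * p2 * cD * cR \<noteq> 0"
    using char_poly_nz[OF Sm_carrier] unfolding cS .
  have lp: "lam > 0" "lam < 1" "lam > 1/4" using lam1 lam2 by auto
  have cD1: "poly cD 1 \<noteq> 0" using Dm_root[of 1] lp unfolding cD_def by auto
  have cDl: "poly cD (complex_of_real lam) \<noteq> 0" using Dm_root[of "complex_of_real lam"] lp unfolding cD_def by auto
  have Rr: "cmod \<mu> < lam" if "poly cR \<mu> = 0" for \<mu>
  proof -
    from Rm_root[OF that[unfolded cR_def]] have "\<mu> = 1/4 \<or> \<mu> = 1/8 \<or> \<mu> = 1/16" .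
    moreover have "cmod \<mu> \<le> 1/4" if "\<mu> = 1/4" using that by (rule ssubst) (simp add: norm_divide)
    moreover have "cmod \<mu> \<le> 1/4" if "\<mu> = 1/8" using that by (rule ssubst) (simp add: norm_divide)
    moreover have "cmod \<mu> \<le> 1/4" if "\<mu> = 1/16" using that by (rule ssubst) (simp add: norm_divide)
    ultimately have "cmod \<mu> \<le> 1/4" by blast
    thus ?thesis using lp by simp
  qed
  have cR1: "poly cR 1 \<noteq> 0" using Rr[of 1] lp by auto
  have cRl: "poly cR (complex_of_real lam) \<noteq> 0" using Rr[of "complex_of_real lam"] lp by auto
  have o0: "order a q = 0" if "poly q a \<noteq> 0" for a and q :: "complex poly"
    using that order_root[of q a] by auto
  have lam_ne: "complex_of_real lam \<noteq> 1" using lp by simp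
  have p1_1: "order 1 p1 = 1" unfolding p1_def using order_power_n_n[of 1 1] by simp
  have p2_1: "order 1 p2 = 0" unfolding p2_def using lam_ne by (intro o0) simp
  have p1_l: "order (complex_of_real lam) p1 = 0" unfolding p1_def using lam_ne by (intro o0) simp
  have p2_l: "order (complex_of_real lam) p2 = 2" unfolding p2_def by (rule order_power_n_n)
  have nz1: "p1 * p2 * cD \<noteq> 0" "p1 * p2 \<noteq> 0" using nz by auto
  have ord: "order a (char_poly Sm) = order a p1 + order a p2 + order a cD + order a cR" for a
    unfolding cS order_mult[OF nz] order_mult[OF nz1(1)] order_mult[OF nz1(2)] ..
  have A: "order 1 (char_poly Sm) = 1"
    unfolding ord p1_1 p2_1 o0[OF cD1] o0[OF cR1] by simp
  have B: "order (complex_of_real lam) (char_poly Sm) = 2"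
    unfolding ord p1_l p2_l o0[OF cDl] o0[OF cRl] by simp
  have C: "cmod \<mu> < lam" if r: "poly (char_poly Sm) \<mu> = 0" and m1: "\<mu> \<noteq> 1" and m2: "\<mu> \<noteq> complex_of_real lam" for \<mu>
  proof -
    have "poly p1 \<mu> * poly p2 \<mu> * poly cD \<mu> * poly cR \<mu> = 0" using r unfolding cS by simp
    moreover have "poly p1 \<mu> \<noteq> 0" using m1 unfolding p1_def by simp
    moreover have "poly p2 \<mu> \<noteq> 0" using m2 unfolding p2_def by simp
    ultimately have "poly cD \<mu> = 0 \<or> poly cR \<mu> = 0" by simp
    thus ?thesis using Dm_root[of \<mu>] Rr[of \<mu>] unfolding cD_def by auto
  qed
  show ?thesis using A B C by blast
qed

end

theorem lemma2:
  fixes n :: nat and d :: "nat \<Rightarrow> real" and lam :: real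
  assumes "n \<ge> 3"
    and "\<And>j. j < n \<Longrightarrow> d j > 0"
    and "1/4 < lam" and "lam < 1"
  shows "order 1 (char_poly (map_mat complex_of_real (Sn d n lam))) = 1
       \<and> order (complex_of_real lam) (char_poly (map_mat complex_of_real (Sn d n lam))) = 2
       \<and> (\<forall>\<mu>. poly (char_poly (map_mat complex_of_real (Sn d n lam))) \<mu> = 0
              \<longrightarrow> \<mu> \<noteq> 1 \<longrightarrow> \<mu> \<noteq> complex_of_real lam \<longrightarrow> cmod \<mu> < lam)"
proof -
  interpret L n d lam using assms by unfold_locales auto
  show ?thesis using final unfolding Sm_def .
qed


end
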